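(* Let $(X,d,\mu)$ be a space of homogeneous type, let $p(\cdot)$ be an exponent, and let $w\in A_{p(\cdot)}$. Then there exists a constant $C$ depending on $p(\cdot)$ and $w$ such that for every ball $B$ and every measurable set $E\subset B$, \[ \frac{\mu(E)}{\mu(B)}\le C\,\frac{\|w\chi_E\|_{p(\cdot)}}{\|w\chi_B\|_{p(\cdot)}}. \]
   Context: A space of homogeneous type $(X,d,\mu)$: $X$ nonempty, $d$ a quasi-metric ($d(x,y)=0$ iff $x=y$, symmetric, $d(x,y)\le A_0(d(x,z)+d(z,y))$ for some $A_0\ge1$), $\mu$ a regular measure on the $\sigma$-algebra generated by balls $B(x,r)=\{y:d(x,y)<r\}$ and open sets, with $0<\mu(B(x,2r))\le C_\mu\mu(B(x,r))<\infty$. An exponent is a measurable $p:X\to[1,\infty]$. With $X_\infty=\{p=\infty\}$, $\rho_{p(\cdot)}(f)=\int_{X\setminus X_\infty}|f(x)|^{p(x)}d\mu+\|f\|_{L^\infty(X_\infty)}$ and $\|f\|_{p(\cdot)}=\inf\{\lambda>0:\rho_{p(\cdot)}(f/\lambda)\le1\}$; $p'(x)=p(x)/(p(x)-1)$ (with $1/0=\infty$, $1/\infty=0$). A weight is a locally integrable $w:X\to[0,\infty]$ with $0<w<\infty$ a.e.; $w\in A_{p(\cdot)}$ means there is $K$ with $\|w\chi_B\|_{p(\cdot)}\|w^{-1}\chi_B\|_{p'(\cdot)}\le K\mu(B)$ for every ball $B$. *)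

theory Defs
  imports "HOL-Analysis.Analysis"
begin

text \<open>The underlying set X is represented by space M.\<close>

definition qball :: "'a set \<Rightarrow> ('a \<Rightarrow> 'a \<Rightarrow> real) \<Rightarrow> 'a \<Rightarrow> real \<Rightarrow> 'a set" where
  "qball X d x r = {y \<in> X. d x y < r}"

definition is_qball :: "'a set \<Rightarrow> ('a \<Rightarrow> 'a \<Rightarrow> real) \<Rightarrow> 'a set \<Rightarrow> bool" where
  "is_qball X d B \<longleftrightarrow> (\<exists>x\<in>X. \<exists>r>0. B = qball X d x r)"

definition qopen :: "'a set \<Rightarrow> ('a \<Rightarrow> 'a \<Rightarrow> real) \<Rightarrow> 'a set \<Rightarrow> bool" where
  "qopen X d U \<longleftrightarrow> U \<subseteq> X \<and> (\<forall>x\<in>U. \<exists>r>0. qball X d x r \<subseteq> U)"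

definition quasi_metric :: "'a set \<Rightarrow> ('a \<Rightarrow> 'a \<Rightarrow> real) \<Rightarrow> real \<Rightarrow> bool" where
  "quasi_metric X d A0 \<longleftrightarrow> A0 \<ge> 1 \<and>
     (\<forall>x\<in>X. \<forall>y\<in>X. d x y \<ge> 0 \<and> (d x y = 0 \<longleftrightarrow> x = y) \<and> d x y = d y x) \<and>
     (\<forall>x\<in>X. \<forall>y\<in>X. \<forall>z\<in>X. d x y \<le> A0 * (d x z + d z y))"

definition regular_measure :: "('a \<Rightarrow> 'a \<Rightarrow> real) \<Rightarrow> 'a measure \<Rightarrow> bool" where
  "regular_measure d M \<longleftrightarrow>
     (\<forall>E\<in>sets M. emeasure M E =
        (INF U\<in>{U. qopen (space M) d U \<and> E \<subseteq> U}. emeasure M U))"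

definition homogeneous_type :: "('a \<Rightarrow> 'a \<Rightarrow> real) \<Rightarrow> 'a measure \<Rightarrow> bool" where
  "homogeneous_type d M \<longleftrightarrow> space M \<noteq> {} \<and>
     (\<exists>A0. quasi_metric (space M) d A0) \<and>
     sets M = sigma_sets (space M)
        ({B. is_qball (space M) d B} \<union> {U. qopen (space M) d U}) \<and>
     regular_measure d M \<and>
     (\<exists>C\<mu>. \<forall>x\<in>space M. \<forall>r>0.
        0 < emeasure M (qball (space M) d x (2*r)) \<and>
        emeasure M (qball (space M) d x (2*r)) \<le> ennreal C\<mu> * emeasure M (qball (space M) d x r) \<and>
        emeasure M (qball (space M) d x r) < \<infinity>)"

definition exponent :: "'a measure \<Rightarrow> ('a \<Rightarrow> ereal) \<Rightarrow> bool" where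
  "exponent M p \<longleftrightarrow> p \<in> borel_measurable M \<and> (\<forall>x\<in>space M. 1 \<le> p x)"

text \<open>Conjugate exponent, with 1/0 = infinity and 1/infinity = 0.\<close>
definition conj_exp :: "('a \<Rightarrow> ereal) \<Rightarrow> 'a \<Rightarrow> ereal" where
  "conj_exp p x = (if p x = 1 then \<infinity> else if p x = \<infinity> then 1
                   else ereal (real_of_ereal (p x) / (real_of_ereal (p x) - 1)))"

definition enn_pow :: "ennreal \<Rightarrow> real \<Rightarrow> ennreal" where
  "enn_pow t q = (if t = \<infinity> then \<infinity> else ennreal (enn2real t powr q))"

definition Linf_on :: "'a measure \<Rightarrow> 'a set \<Rightarrow> ('a \<Rightarrow> ennreal) \<Rightarrow> ennreal" where
  "Linf_on M S f = Inf {c. AE x in M. x \<in> S \<longrightarrow> f x \<le> c}"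

definition modular :: "'a measure \<Rightarrow> ('a \<Rightarrow> ereal) \<Rightarrow> ('a \<Rightarrow> ennreal) \<Rightarrow> ennreal" where
  "modular M p f =
     (\<integral>\<^sup>+ x. indicator {x \<in> space M. p x \<noteq> \<infinity>} x * enn_pow (f x) (real_of_ereal (p x)) \<partial>M)
     + Linf_on M {x \<in> space M. p x = \<infinity>} f"

definition vnorm :: "'a measure \<Rightarrow> ('a \<Rightarrow> ereal) \<Rightarrow> ('a \<Rightarrow> ennreal) \<Rightarrow> ennreal" where
  "vnorm M p f = Inf {ennreal t | t. t > 0 \<and> modular M p (\<lambda>x. f x / ennreal t) \<le> 1}"

definition weight :: "('a \<Rightarrow> 'a \<Rightarrow> real) \<Rightarrow> 'a measure \<Rightarrow> ('a \<Rightarrow> ennreal) \<Rightarrow> bool" where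
  "weight d M w \<longleftrightarrow> w \<in> borel_measurable M \<and>
     (\<forall>B. is_qball (space M) d B \<longrightarrow> (\<integral>\<^sup>+ x\<in>B. w x \<partial>M) < \<infinity>) \<and>
     (AE x in M. 0 < w x \<and> w x < \<infinity>)"

definition A_p :: "('a \<Rightarrow> 'a \<Rightarrow> real) \<Rightarrow> 'a measure \<Rightarrow> ('a \<Rightarrow> ereal) \<Rightarrow> ('a \<Rightarrow> ennreal) \<Rightarrow> bool" where
  "A_p d M p w \<longleftrightarrow> weight d M w \<and>
     (\<exists>K::real. \<forall>B. is_qball (space M) d B \<longrightarrow>
        vnorm M p (\<lambda>x. w x * indicator B x) * vnorm M (conj_exp p) (\<lambda>x. inverse (w x) * indicator B x)
          \<le> ennreal K * emeasure M B)"

end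

theory Submission
  imports Defs
begin

lemma enn_pow_meas[measurable]:
  assumes [measurable]: "f \<in> borel_measurable M" "p \<in> borel_measurable M"
  shows "(\<lambda>x. enn_pow (f x) (real_of_ereal (p x))) \<in> borel_measurable M"
  unfolding enn_pow_def by measurable

lemma eq_set_meas:
  assumes "p \<in> borel_measurable M"
  shows "{x\<in>space M. p x = (c::ereal)} \<in> sets M"
  using measurable_equality_set[of p M "\<lambda>_. c"] assms by simp

lemma conj_meas[measurable]: assumes [measurable]: "p \<in> borel_measurable M" shows "conj_exp p \<in> borel_measurable M"
  unfolding conj_exp_def by measurable

lemma enn_pow_1[simp]: "enn_pow y 1 = y"
  unfolding enn_pow_def by (cases y rule: ennreal_cases) auto

lemma enn_pow_ge: assumes "1 \<le> y" "1 \<le> P" shows "y \<le> enn_pow y P"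
proof (cases y rule: ennreal_cases)
  case (real r)
  then have "1 \<le> r" using assms(1) by (metis ennreal_1 ennreal_le_iff2 not_one_le_zero)
  then have "r powr 1 \<le> r powr P" using assms(2) by (intro powr_mono) auto
  then show ?thesis using real \<open>1 \<le> r\<close> by (simp add: enn_pow_def)
qed (simp add: enn_pow_def)

lemma young_enn:
  assumes "1 < P"
  shows "a * b \<le> enn_pow a P + enn_pow b (P/(P-1))"
proof (cases "a = top \<or> b = top")
  case True then show ?thesis by (auto simp: enn_pow_def)
next
  case False
  then obtain x y where a: "a = ennreal x" "0 \<le> x" and b: "b = ennreal y" "0 \<le> y"
    by (metis ennreal_cases)
  define Q where "Q = P/(P-1)"
  have Q1: "1 < Q" using assms unfolding Q_def by (simp add: field_simps)
  have c: "1/P + 1/Q = 1" using assms unfolding Q_def by (simp add: field_simps)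
  have "x * y \<le> x powr P / P + y powr Q / Q" by (rule Youngs_inequality) (use assms Q1 c a b in auto)
  also have "\<dots> \<le> x powr P + y powr Q"
    using assms Q1 mult_left_mono[of 1 P "x powr P"] mult_left_mono[of 1 Q "y powr Q"]
    by (intro add_mono) (auto simp: divide_le_eq)
  finally have "x * y \<le> x powr P + y powr Q" .
  then show ?thesis using a b unfolding Q_def[symmetric]
    by (simp add: enn_pow_def ennreal_mult[symmetric] ennreal_plus[symmetric] del: ennreal_plus)
qed

lemma Linf_AE: "AE x in M. x \<in> S \<longrightarrow> f x \<le> Linf_on M S f"
proof (cases "Linf_on M S f = top")
  case True then show ?thesis by simp
next
  case False
  define L where "L = Linf_on M S f"
  have Lt: "L < top" using False L_def by (simp add: top.not_eq_extremum)
  have h1: "AE x in M. x \<in> S \<longrightarrow> f x \<le> L + ennreal (1 / Suc n)" for n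
  proof -
    have "L < L + ennreal (1 / Suc n)"
      using Lt by (cases L rule: ennreal_cases) (auto simp flip: ennreal_plus simp: ennreal_less_iff)
    then obtain c where c: "AE x in M. x \<in> S \<longrightarrow> f x \<le> c" "c < L + ennreal (1 / Suc n)"
      unfolding L_def Linf_on_def by (auto simp: Inf_less_iff)
    then show ?thesis by (auto elim: eventually_mono)
  qed
  have "AE x in M. \<forall>n. x \<in> S \<longrightarrow> f x \<le> L + ennreal (1 / Suc n)"
    by (rule AE_all_countable[THEN iffD2]) (rule allI, rule h1)
  then show ?thesis unfolding L_def[symmetric]
  proof (rule eventually_mono, intro impI)
    fix x assume h: "\<forall>n. x \<in> S \<longrightarrow> f x \<le> L + ennreal (1 / Suc n)" and "x \<in> S"
    show "f x \<le> L"
    proof (rule ennreal_le_epsilon)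
      fix e :: real assume "0 < e"
      then obtain n where n: "inverse (real (Suc n)) < e" using reals_Archimedean by blast
      have "f x \<le> L + ennreal (1 / Suc n)" using h \<open>x \<in> S\<close> by blast
      also have "\<dots> \<le> L + ennreal e" using n by (intro add_left_mono ennreal_leI) (simp add: field_simps)
      finally show "f x \<le> L + ennreal e" .
    qed
  qed
qed

lemma holder_unit:
  assumes ex: "exponent M p" and fm[measurable]: "f \<in> borel_measurable M"
    and gm[measurable]: "g \<in> borel_measurable M"
    and mf: "modular M p f \<le> 1" and mg: "modular M (conj_exp p) g \<le> 1"
  shows "(\<integral>\<^sup>+x. f x * g x \<partial>M) \<le> 4"
proof -
  have pm[measurable]: "p \<in> borel_measurable M" and p1: "\<And>x. x \<in> space M \<Longrightarrow> 1 \<le> p x"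
    using ex unfolding exponent_def by auto
  define q where "q = conj_exp p"
  have qm[measurable]: "q \<in> borel_measurable M" unfolding q_def by measurable
  define Si where "Si = {x\<in>space M. p x = \<infinity>}"
  define S1 where "S1 = {x\<in>space M. p x = 1}"
  define Sm where "Sm = space M - Si - S1"
  have Sim[measurable]: "Si \<in> sets M" unfolding Si_def by (rule eq_set_meas[OF pm])
  have S1m[measurable]: "S1 \<in> sets M" unfolding S1_def by (rule eq_set_meas[OF pm])
  have Smm[measurable]: "Sm \<in> sets M" unfolding Sm_def by measurable
  define Pf where "Pf = {x\<in>space M. p x \<noteq> \<infinity>}"
  define Pg where "Pg = {x\<in>space M. q x \<noteq> \<infinity>}"
  have Pfm[measurable]: "Pf \<in> sets M"
  proof -
    have "Pf = space M - Si" unfolding Pf_def Si_def by auto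
    then show ?thesis by simp
  qed
  have Pgm[measurable]: "Pg \<in> sets M"
  proof -
    have "Pg = space M - {x\<in>space M. q x = \<infinity>}" unfolding Pg_def by auto
    then show ?thesis using eq_set_meas[OF qm] by simp
  qed
  define If where "If = (\<integral>\<^sup>+ x. indicator Pf x * enn_pow (f x) (real_of_ereal (p x)) \<partial>M)"
  define Ig where "Ig = (\<integral>\<^sup>+ x. indicator Pg x * enn_pow (g x) (real_of_ereal (q x)) \<partial>M)"
  define Lf where "Lf = Linf_on M Si f"
  define Lg where "Lg = Linf_on M {x\<in>space M. q x = \<infinity>} g"
  have mf': "If + Lf \<le> 1" using mf unfolding modular_def If_def Lf_def Pf_def Si_def by simp
  have mg': "Ig + Lg \<le> 1" using mg unfolding modular_def Ig_def Lg_def Pg_def q_def by simp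
  have "If \<le> If + Lf" by simp
  then have If1: "If \<le> 1" using mf' by (rule order.trans)
  have "Lf \<le> If + Lf" by simp
  then have Lf1: "Lf \<le> 1" using mf' by (rule order.trans)
  have "Ig \<le> Ig + Lg" by simp
  then have Ig1: "Ig \<le> 1" using mg' by (rule order.trans)
  have "Lg \<le> Ig + Lg" by simp
  then have Lg1: "Lg \<le> 1" using mg' by (rule order.trans)
  have qinf: "q x = \<infinity> \<longleftrightarrow> x \<in> S1" if "x \<in> space M" for x
    using p1[OF that] that unfolding q_def conj_exp_def S1_def by auto
  have qSi: "q x = 1" if "x \<in> Si" for x using that unfolding q_def conj_exp_def Si_def by auto
  have qset: "{x\<in>space M. q x = \<infinity>} = S1" using qinf S1_def by auto
  have split: "(\<integral>\<^sup>+x. f x * g x \<partial>M) =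
      (\<integral>\<^sup>+x. indicator Si x * (f x * g x) \<partial>M) + (\<integral>\<^sup>+x. indicator S1 x * (f x * g x) \<partial>M)
      + (\<integral>\<^sup>+x. indicator Sm x * (f x * g x) \<partial>M)"
  proof -
    have "(\<integral>\<^sup>+x. f x * g x \<partial>M) = (\<integral>\<^sup>+x. (indicator Si x * (f x * g x) + indicator S1 x * (f x * g x))
      + indicator Sm x * (f x * g x) \<partial>M)"
      by (rule nn_integral_cong) (auto simp: Sm_def Si_def S1_def split: split_indicator)
    also have "\<dots> = (\<integral>\<^sup>+x. indicator Si x * (f x * g x) + indicator S1 x * (f x * g x) \<partial>M)
      + (\<integral>\<^sup>+x. indicator Sm x * (f x * g x) \<partial>M)"
      by (rule nn_integral_add) measurable
    also have "(\<integral>\<^sup>+x. indicator Si x * (f x * g x) + indicator S1 x * (f x * g x) \<partial>M) =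
      (\<integral>\<^sup>+x. indicator Si x * (f x * g x) \<partial>M) + (\<integral>\<^sup>+x. indicator S1 x * (f x * g x) \<partial>M)"
      by (rule nn_integral_add) measurable
    finally show ?thesis .
  qed
  have A: "(\<integral>\<^sup>+x. indicator Si x * (f x * g x) \<partial>M) \<le> 1"
  proof -
    have "(\<integral>\<^sup>+x. indicator Si x * (f x * g x) \<partial>M) \<le> (\<integral>\<^sup>+x. Lf * (indicator Si x * g x) \<partial>M)"
    proof (rule nn_integral_mono_AE)
      show "AE x in M. indicator Si x * (f x * g x) \<le> Lf * (indicator Si x * g x)"
        using Linf_AE[where M=M and S=Si and f=f] unfolding Lf_def[symmetric]
        by (rule eventually_mono) (auto simp: mult_right_mono split: split_indicator)
    qed
    also have "\<dots> = Lf * (\<integral>\<^sup>+x. indicator Si x * g x \<partial>M)"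
      by (rule nn_integral_cmult) measurable
    also have "\<dots> \<le> 1 * 1"
    proof (rule mult_mono)
      show "(\<integral>\<^sup>+x. indicator Si x * g x \<partial>M) \<le> 1"
      proof -
        have "(\<integral>\<^sup>+x. indicator Si x * g x \<partial>M) \<le> Ig"
          unfolding Ig_def
        proof (rule nn_integral_mono)
          fix x assume "x \<in> space M"
          show "indicator Si x * g x \<le> indicator Pg x * enn_pow (g x) (real_of_ereal (q x))"
          proof (cases "x \<in> Si")
            case True
            then have "q x = 1" by (rule qSi)
            then show ?thesis using True \<open>x \<in> space M\<close> by (simp add: Pg_def)
          qed simp
        qed
        then show ?thesis using Ig1 by (rule order.trans)
      qed
    qed (use Lf1 in auto)
    finally show ?thesis by simp
  qed
  have B: "(\<integral>\<^sup>+x. indicator S1 x * (f x * g x) \<partial>M) \<le> 1"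
  proof -
    have "(\<integral>\<^sup>+x. indicator S1 x * (f x * g x) \<partial>M) \<le> (\<integral>\<^sup>+x. Lg * (indicator S1 x * f x) \<partial>M)"
    proof (rule nn_integral_mono_AE)
      show "AE x in M. indicator S1 x * (f x * g x) \<le> Lg * (indicator S1 x * f x)"
        using Linf_AE[where M=M and S="{x\<in>space M. q x = \<infinity>}" and f=g] unfolding qset Lg_def[unfolded qset, symmetric]
        by (rule eventually_mono) (auto split: split_indicator simp: mult.commute[of "f _"] intro: mult_right_mono)
    qed
    also have "\<dots> = Lg * (\<integral>\<^sup>+x. indicator S1 x * f x \<partial>M)"
      by (rule nn_integral_cmult) measurable
    also have "\<dots> \<le> 1 * 1"
    proof (rule mult_mono)
      show "(\<integral>\<^sup>+x. indicator S1 x * f x \<partial>M) \<le> 1"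
      proof -
        have "(\<integral>\<^sup>+x. indicator S1 x * f x \<partial>M) \<le> If"
          unfolding If_def
        proof (rule nn_integral_mono)
          fix x assume "x \<in> space M"
          show "indicator S1 x * f x \<le> indicator Pf x * enn_pow (f x) (real_of_ereal (p x))"
          proof (cases "x \<in> S1")
            case True
            then have "p x = 1" by (simp add: S1_def)
            then show ?thesis using True \<open>x \<in> space M\<close> by (simp add: Pf_def)
          qed simp
        qed
        then show ?thesis using If1 by (rule order.trans)
      qed
    qed (use Lg1 in auto)
    finally show ?thesis by simp
  qed
  have C: "(\<integral>\<^sup>+x. indicator Sm x * (f x * g x) \<partial>M) \<le> If + Ig"
  proof -
    have "(\<integral>\<^sup>+x. indicator Sm x * (f x * g x) \<partial>M) \<le>
       (\<integral>\<^sup>+x. indicator Pf x * enn_pow (f x) (real_of_ereal (p x)) + indicator Pg x * enn_pow (g x) (real_of_ereal (q x)) \<partial>M)"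
    proof (rule nn_integral_mono)
      fix x assume x: "x \<in> space M"
      show "indicator Sm x * (f x * g x) \<le> indicator Pf x * enn_pow (f x) (real_of_ereal (p x)) + indicator Pg x * enn_pow (g x) (real_of_ereal (q x))"
      proof (cases "x \<in> Sm")
        case True
        define P where "P = real_of_ereal (p x)"
        have pne: "p x \<noteq> \<infinity>" "p x \<noteq> 1" using True unfolding Sm_def Si_def S1_def by auto
        have pP: "p x = ereal P" using pne p1[OF x] unfolding P_def by (cases "p x") auto
        have P1: "1 < P" using pP pne p1[OF x] by auto
        have qx: "q x = ereal (P / (P - 1))" using pne unfolding q_def conj_exp_def P_def by auto
        have "x \<in> Pf" "x \<in> Pg" using x pne qx unfolding Pf_def Pg_def by auto
        then show ?thesis using True young_enn[OF P1, of "f x" "g x"] qx unfolding P_def[symmetric]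
          by simp
      qed simp
    qed
    also have "\<dots> = If + Ig" unfolding If_def Ig_def by (rule nn_integral_add) measurable
    finally show ?thesis .
  qed
  have "(\<integral>\<^sup>+x. f x * g x \<partial>M) \<le> 1 + 1 + (1 + 1)"
  proof -
    have "If + Ig \<le> 1 + 1" using If1 Ig1 by (rule add_mono)
    with C have C': "(\<integral>\<^sup>+x. indicator Sm x * (f x * g x) \<partial>M) \<le> 1 + 1" by (rule order.trans)
    show ?thesis unfolding split by (intro add_mono A B C')
  qed
  then show ?thesis by simp
qed

lemma holder_scaled:
  assumes ex: "exponent M p" and fm[measurable]: "f \<in> borel_measurable M"
    and gm[measurable]: "g \<in> borel_measurable M"
    and s: "0 < s" and t: "0 < t"
    and mf: "modular M p (\<lambda>x. f x / ennreal s) \<le> 1"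
    and mg: "modular M (conj_exp p) (\<lambda>x. g x / ennreal t) \<le> 1"
  shows "(\<integral>\<^sup>+x. f x * g x \<partial>M) \<le> 4 * ennreal s * ennreal t"
proof -
  have u: "(\<integral>\<^sup>+x. (f x / ennreal s) * (g x / ennreal t) \<partial>M) \<le> 4"
    by (rule holder_unit[OF ex _ _ mf mg]) measurable
  have eq: "f x * g x = (ennreal s * ennreal t) * ((f x / ennreal s) * (g x / ennreal t))" for x
  proof -
    have a: "ennreal s * (f x / ennreal s) = f x"
      using s by (simp add: ennreal_times_divide mult.commute[of "ennreal s"] mult_divide_eq_ennreal)
    have b: "ennreal t * (g x / ennreal t) = g x"
      using t by (simp add: ennreal_times_divide mult.commute[of "ennreal t"] mult_divide_eq_ennreal)
    have "(ennreal s * ennreal t) * ((f x / ennreal s) * (g x / ennreal t)) = (ennreal s * (f x / ennreal s)) * (ennreal t * (g x / ennreal t))"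
      by (simp add: ac_simps)
    then show ?thesis using a b by simp
  qed
  have "(\<integral>\<^sup>+x. f x * g x \<partial>M) = (ennreal s * ennreal t) * (\<integral>\<^sup>+x. (f x / ennreal s) * (g x / ennreal t) \<partial>M)"
    unfolding eq by (rule nn_integral_cmult) measurable
  also have "\<dots> \<le> (ennreal s * ennreal t) * 4" using u by (rule mult_left_mono) simp
  finally show ?thesis by (simp add: ac_simps)
qed

lemma inf_prod_bound:
  fixes X k :: ennreal and SA SC :: "ennreal set"
  assumes A: "\<forall>s\<in>SA. 0 < s \<and> s < top" and C: "\<forall>t\<in>SC. 0 < t \<and> t < top"
    and H: "\<forall>s\<in>SA. \<forall>t\<in>SC. X \<le> k * s * t" and k: "0 < k" "k < top"
    and c0: "0 < Inf SC" and ct: "Inf SC < top"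
  shows "X \<le> k * Inf SA * Inf SC"
proof -
  have step1: "X \<le> k * t * Inf SA" if tC: "t \<in> SC" for t
  proof -
    have kt: "0 < k * t" "k * t < top" using C tC k by (auto simp: ennreal_mult_less_top ennreal_zero_less_mult_iff)
    have "X / (k * t) \<le> Inf SA"
    proof (rule Inf_greatest)
      fix s assume "s \<in> SA"
      then have "X \<le> k * s * t" using H tC by blast
      then have "X \<le> (k * t) * s" by (simp add: ac_simps)
      then show "X / (k * t) \<le> s" using kt by (intro divide_le_posI_ennreal) auto
    qed
    then have "X / (k * t) * (k * t) \<le> Inf SA * (k * t)" by (rule mult_right_mono) simp
    moreover have "X / (k * t) * (k * t) = X"
      using kt by (simp add: ennreal_divide_times ennreal_times_divide) (rule mult_divide_eq_ennreal, auto)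
    ultimately show ?thesis by (simp add: ac_simps)
  qed
  show ?thesis
  proof (cases "Inf SA = 0")
    case True
    have "SC \<noteq> {}" using ct by auto
    then obtain t where "t \<in> SC" by auto
    then show ?thesis using step1 True by simp
  next
    case False
    show ?thesis
    proof (cases "Inf SA = top")
      case True
      have "k * top * Inf SC = top" using c0 k by (simp add: ennreal_mult_top ennreal_top_mult) (metis not_less_iff_gr_or_eq)
      then show ?thesis unfolding True by simp
    next
      case False2: False
      have i0: "0 < Inf SA" using False by (simp add: zero_less_iff_neq_zero)
      have it: "Inf SA < top" using False2 top.not_eq_extremum by blast
      have ka: "0 < k * Inf SA" "k * Inf SA < top" using i0 it k
        by (auto simp: ennreal_mult_less_top ennreal_zero_less_mult_iff)
      have "X / (k * Inf SA) \<le> Inf SC"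
      proof (rule Inf_greatest)
        fix t assume "t \<in> SC"
        then have "X \<le> k * t * Inf SA" using step1 by blast
        then have "X \<le> (k * Inf SA) * t" by (simp add: ac_simps)
        then show "X / (k * Inf SA) \<le> t" using ka by (intro divide_le_posI_ennreal) auto
      qed
      then have "X / (k * Inf SA) * (k * Inf SA) \<le> Inf SC * (k * Inf SA)" by (rule mult_right_mono) simp
      moreover have "X / (k * Inf SA) * (k * Inf SA) = X"
        using ka by (simp add: ennreal_divide_times ennreal_times_divide) (rule mult_divide_eq_ennreal, auto)
      ultimately show ?thesis by (simp add: ac_simps)
    qed
  qed
qed

lemma holder_vnorm:
  assumes ex: "exponent M p" and fm[measurable]: "f \<in> borel_measurable M"
    and gm[measurable]: "g \<in> borel_measurable M"
    and c0: "0 < vnorm M (conj_exp p) g" and ct: "vnorm M (conj_exp p) g < top"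
  shows "(\<integral>\<^sup>+x. f x * g x \<partial>M) \<le> 4 * vnorm M p f * vnorm M (conj_exp p) g"
  unfolding vnorm_def
proof (rule inf_prod_bound)
  show "\<forall>s\<in>{ennreal t |t. 0 < t \<and> modular M p (\<lambda>x. f x / ennreal t) \<le> 1}. 0 < s \<and> s < top" by auto
  show "\<forall>s\<in>{ennreal t |t. 0 < t \<and> modular M (conj_exp p) (\<lambda>x. g x / ennreal t) \<le> 1}. 0 < s \<and> s < top" by auto
  show "\<forall>s\<in>{ennreal t |t. 0 < t \<and> modular M p (\<lambda>x. f x / ennreal t) \<le> 1}.
       \<forall>t\<in>{ennreal t |t. 0 < t \<and> modular M (conj_exp p) (\<lambda>x. g x / ennreal t) \<le> 1}.
         integral\<^sup>N M (\<lambda>x. f x * g x) \<le> 4 * s * t"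
    using holder_scaled[OF ex fm gm] by auto
qed (use c0 ct in \<open>auto simp: vnorm_def\<close>)

lemma vnorm_zero_AE:
  assumes ex: "exponent M p" and fm[measurable]: "f \<in> borel_measurable M" and z: "vnorm M p f = 0"
  shows "AE x in M. f x = 0"
proof (rule ccontr)
  assume nAE: "\<not> (AE x in M. f x = 0)"
  have pm[measurable]: "p \<in> borel_measurable M" and p1: "\<And>x. x \<in> space M \<Longrightarrow> 1 \<le> p x"
    using ex unfolding exponent_def by auto
  have small: "\<exists>t. 0 < t \<and> t < e \<and> modular M p (\<lambda>x. f x / ennreal t) \<le> 1" if e: "0 < e" for e :: real
  proof -
    have "Inf {ennreal t | t. t > 0 \<and> modular M p (\<lambda>x. f x / ennreal t) \<le> 1} < ennreal e"
      using z e unfolding vnorm_def by simp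
    then obtain t where t: "0 < t" "modular M p (\<lambda>x. f x / ennreal t) \<le> 1" "ennreal t < ennreal e"
      by (auto simp: Inf_less_iff)
    then have "t < e" by (simp add: ennreal_less_iff)
    then show ?thesis using t by blast
  qed
  define A where "A n = {x\<in>space M. ennreal (1 / Suc n) < f x}" for n :: nat
  have Am[measurable]: "A n \<in> sets M" for n unfolding A_def by measurable
  have Nm: "{x\<in>space M. f x \<noteq> 0} \<in> sets M" by measurable
  have UA: "{x\<in>space M. f x \<noteq> 0} = (\<Union>n. A n)"
  proof (intro equalityI subsetI)
    fix x assume x: "x \<in> {x\<in>space M. f x \<noteq> 0}"
    show "x \<in> (\<Union>n. A n)"
    proof (cases "f x" rule: ennreal_cases)
      case (real r)
      then have "0 < r" using x by auto
      then obtain n where "inverse (real (Suc n)) < r" using reals_Archimedean by blast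
      then have "1 / real (Suc n) < r" by (simp add: inverse_eq_divide)
      then have "ennreal (1 / Suc n) < ennreal r" by (subst ennreal_less_iff) auto
      then have "ennreal (1 / Suc n) < f x" using real by simp
      then show ?thesis using x unfolding A_def by auto
    next
      case top
      then show ?thesis using x unfolding A_def by auto
    qed
  next
    fix x assume "x \<in> (\<Union>n. A n)"
    then show "x \<in> {x\<in>space M. f x \<noteq> 0}" unfolding A_def by auto
  qed
  have "emeasure M {x\<in>space M. f x \<noteq> 0} \<noteq> 0"
    using nAE AE_iff_measurable[OF Nm, of "\<lambda>x. f x = 0"] by auto
  then obtain n where nA: "emeasure M (A n) \<noteq> 0"
    unfolding UA using emeasure_UN_eq_0[of M A] Am by blast
  define \<eta> where "\<eta> = 1 / real (Suc n)"
  have eta: "0 < \<eta>" unfolding \<eta>_def by simp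
  define Xi where "Xi = {x\<in>space M. p x = \<infinity>}"
  have Xim[measurable]: "Xi \<in> sets M" unfolding Xi_def by (rule eq_set_meas[OF pm])
  define B1 where "B1 = A n - Xi"
  define B2 where "B2 = A n \<inter> Xi"
  have B1m[measurable]: "B1 \<in> sets M" and B2m[measurable]: "B2 \<in> sets M" unfolding B1_def B2_def by auto
  have "A n = B1 \<union> B2" unfolding B1_def B2_def by auto
  then have "emeasure M (A n) \<le> emeasure M B1 + emeasure M B2" using emeasure_subadditive[OF B1m B2m] by simp
  then have B12: "emeasure M B1 \<noteq> 0 \<or> emeasure M B2 \<noteq> 0" using nA by auto
  have key: "ennreal (\<eta> / t) \<le> f x / ennreal t" if "x \<in> A n" "0 < t" for x t
  proof -
    have "ennreal \<eta> \<le> f x" using that unfolding A_def \<eta>_def by auto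
    then have "ennreal \<eta> / ennreal t \<le> f x / ennreal t" by (rule divide_right_mono_ennreal)
    then show ?thesis using that eta by (simp add: divide_ennreal)
  qed
  from B12 show False
  proof
    assume "emeasure M B1 \<noteq> 0"
    obtain m0 where m0: "0 < m0" "ennreal m0 \<le> emeasure M B1"
    proof (cases "emeasure M B1" rule: ennreal_cases)
      case (real r)
      then show ?thesis using that \<open>emeasure M B1 \<noteq> 0\<close> by (metis ennreal_0 less_eq_real_def order_refl)
    next
      case top
      then show ?thesis using that[of 1] by simp
    qed
    define e where "e = \<eta> * min 1 m0 / 2"
    have "0 < e" unfolding e_def using eta m0 by simp
    then obtain t where t: "0 < t" "t < e" "modular M p (\<lambda>x. f x / ennreal t) \<le> 1" using small by blast
    have te: "t < \<eta>" "1 < \<eta> / t * m0"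
    proof -
      have "e \<le> \<eta> / 2" unfolding e_def using eta m0 by (simp add: mult_left_le)
      then show "t < \<eta>" using t eta by simp
      have "e \<le> \<eta> * m0 / 2" unfolding e_def using eta m0 by (simp add: mult_left_mono)
      then have "2 * t < \<eta> * m0" using t by simp
      then show "1 < \<eta> / t * m0" using t by (simp add: field_simps)
    qed
    have "ennreal (\<eta> / t * m0) = ennreal (\<eta> / t) * ennreal m0" by (rule ennreal_mult) (use t eta m0 in auto)
    also have "\<dots> \<le> ennreal (\<eta> / t) * emeasure M B1" using m0 by (intro mult_left_mono) auto
    also have "\<dots> = (\<integral>\<^sup>+x. ennreal (\<eta> / t) * indicator B1 x \<partial>M)"
      by (simp add: nn_integral_cmult_indicator)
    also have "\<dots> \<le> (\<integral>\<^sup>+ x. indicator {x \<in> space M. p x \<noteq> \<infinity>} x * enn_pow (f x / ennreal t) (real_of_ereal (p x)) \<partial>M)"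
    proof (rule nn_integral_mono)
      fix x assume x: "x \<in> space M"
      show "ennreal (\<eta> / t) * indicator B1 x \<le> indicator {x \<in> space M. p x \<noteq> \<infinity>} x * enn_pow (f x / ennreal t) (real_of_ereal (p x))"
      proof (cases "x \<in> B1")
        case True
        then have xA: "x \<in> A n" and pinf: "p x \<noteq> \<infinity>" using x unfolding B1_def Xi_def by auto
        have k: "ennreal (\<eta> / t) \<le> f x / ennreal t" using key[OF xA t(1)] .
        have "1 \<le> ennreal (\<eta> / t)" using te t by simp
        then have "1 \<le> f x / ennreal t" using k by (rule order.trans)
        moreover have "1 \<le> real_of_ereal (p x)" using p1[OF x] pinf by (cases "p x") auto
        ultimately have "f x / ennreal t \<le> enn_pow (f x / ennreal t) (real_of_ereal (p x))"
          by (rule enn_pow_ge)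
        then show ?thesis using True k x pinf by simp
      qed simp
    qed
    also have "\<dots> \<le> modular M p (\<lambda>x. f x / ennreal t)" unfolding modular_def by simp
    also have "\<dots> \<le> 1" by (rule t(3))
    finally have "ennreal (\<eta> / t * m0) \<le> 1" .
    then show False using te by (simp add: ennreal_le_1 not_le)
  next
    assume nB2: "emeasure M B2 \<noteq> 0"
    have "0 < \<eta> / 2" using eta by simp
    then obtain t where t: "0 < t" "t < \<eta> / 2" "modular M p (\<lambda>x. f x / ennreal t) \<le> 1" using small by blast
    have big: "1 < \<eta> / t" using t by (simp add: field_simps)
    have "ennreal (\<eta> / t) \<le> Linf_on M Xi (\<lambda>x. f x / ennreal t)"
      unfolding Linf_on_def
    proof (rule Inf_greatest)
      fix c assume "c \<in> {c. AE x in M. x \<in> Xi \<longrightarrow> f x / ennreal t \<le> c}"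
      then have c: "AE x in M. x \<in> Xi \<longrightarrow> f x / ennreal t \<le> c" by simp
      show "ennreal (\<eta> / t) \<le> c"
      proof (rule ccontr)
        assume "\<not> ennreal (\<eta> / t) \<le> c"
        then have lt: "c < ennreal (\<eta> / t)" by simp
        have "AE x in M. x \<notin> B2"
          using c
        proof (rule eventually_mono)
          fix x assume h: "x \<in> Xi \<longrightarrow> f x / ennreal t \<le> c"
          show "x \<notin> B2"
          proof
            assume "x \<in> B2"
            then have "x \<in> Xi" "x \<in> A n" unfolding B2_def by auto
            then show False using h key[of x t] t lt by auto
          qed
        qed
        moreover have "{x\<in>space M. \<not> x \<notin> B2} = B2" using sets.sets_into_space[OF B2m] by auto
        ultimately have "emeasure M B2 = 0" using AE_iff_measurable[OF B2m, of "\<lambda>x. x \<notin> B2"] by simp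
        then show False using nB2 by simp
      qed
    qed
    also have "\<dots> \<le> modular M p (\<lambda>x. f x / ennreal t)" unfolding modular_def Xi_def by simp
    also have "\<dots> \<le> 1" by (rule t(3))
    finally have "ennreal (\<eta> / t) \<le> 1" .
    then show False using big by (simp add: ennreal_le_1 not_le)
  qed
qed

lemma conj_exponent: assumes "exponent M p" shows "exponent M (conj_exp p)"
proof -
  have pm[measurable]: "p \<in> borel_measurable M" and p1: "\<And>x. x \<in> space M \<Longrightarrow> 1 \<le> p x"
    using assms unfolding exponent_def by auto
  have "1 \<le> conj_exp p x" if x: "x \<in> space M" for x
  proof (cases "p x = 1 \<or> p x = \<infinity>")
    case True then show ?thesis by (auto simp: conj_exp_def)
  next
    case False
    then obtain P where P: "p x = ereal P" "1 < P" using p1[OF x] by (cases "p x") auto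
    then have "1 \<le> P / (P - 1)" by (simp add: field_simps)
    then show ?thesis using False P by (simp add: conj_exp_def)
  qed
  then show ?thesis unfolding exponent_def by simp
qed

lemma enn_mult_inverse: "0 < (y::ennreal) \<Longrightarrow> y < top \<Longrightarrow> y * inverse y = 1"
  by (cases y rule: ennreal_cases) (auto simp: inverse_ennreal ennreal_mult[symmetric])

theorem lemma3p2:
  fixes d :: "'a \<Rightarrow> 'a \<Rightarrow> real" and M :: "'a measure"
    and p :: "'a \<Rightarrow> ereal" and w :: "'a \<Rightarrow> ennreal"
  assumes "homogeneous_type d M"
    and "exponent M p"
    and "A_p d M p w"
  shows "\<exists>C::real. \<forall>B E. is_qball (space M) d B \<longrightarrow> E \<in> sets M \<longrightarrow> E \<subseteq> B \<longrightarrow>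
           emeasure M E / emeasure M B
             \<le> ennreal C * (vnorm M p (\<lambda>x. w x * indicator E x) / vnorm M p (\<lambda>x. w x * indicator B x))"
proof -
  from assms(1) have hsets: "sets M = sigma_sets (space M) ({B. is_qball (space M) d B} \<union> {U. qopen (space M) d U})"
    unfolding homogeneous_type_def by blast
  from assms(1) obtain Cmu where dbl: "\<forall>x\<in>space M. \<forall>r>0.
        0 < emeasure M (qball (space M) d x (2*r)) \<and>
        emeasure M (qball (space M) d x (2*r)) \<le> ennreal Cmu * emeasure M (qball (space M) d x r) \<and>
        emeasure M (qball (space M) d x r) < \<infinity>"
    unfolding homogeneous_type_def by blast
  from assms(3) have wt: "weight d M w" unfolding A_p_def by blast
  from assms(3) obtain K where K: "\<forall>B. is_qball (space M) d B \<longrightarrow>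
        vnorm M p (\<lambda>x. w x * indicator B x) * vnorm M (conj_exp p) (\<lambda>x. inverse (w x) * indicator B x)
          \<le> ennreal K * emeasure M B"
    unfolding A_p_def by blast
  have wm[measurable]: "w \<in> borel_measurable M" and wae: "AE x in M. 0 < w x \<and> w x < \<infinity>"
    using wt unfolding weight_def by auto
  have pm[measurable]: "p \<in> borel_measurable M" using assms(2) unfolding exponent_def by auto
  show ?thesis
  proof (rule exI[of _ "4 * K"], intro allI impI)
    fix B E assume Bb: "is_qball (space M) d B" and Em[measurable]: "E \<in> sets M" and EB: "E \<subseteq> B"
    obtain x0 r where x0: "x0 \<in> space M" "0 < r" "B = qball (space M) d x0 r"
      using Bb unfolding is_qball_def by blast
    have Bm[measurable]: "B \<in> sets M" unfolding hsets by (rule sigma_sets.Basic) (use Bb in auto)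
    have Bsp: "B \<subseteq> space M" using Bm sets.sets_into_space by blast
    have Bpos: "0 < emeasure M B"
    proof -
      have "0 < r / 2" using x0 by simp
      then have "0 < emeasure M (qball (space M) d x0 (2 * (r / 2)))" using dbl x0(1) by blast
      then show ?thesis using x0(3) by simp
    qed
    have Bfin: "emeasure M B < \<infinity>" using dbl x0 by blast
    define fE where "fE = (\<lambda>x. w x * indicator E x)"
    define fB where "fB = (\<lambda>x. w x * indicator B x)"
    define g where "g = (\<lambda>x. inverse (w x) * indicator B x)"
    have fEm[measurable]: "fE \<in> borel_measurable M" unfolding fE_def by measurable
    have fBm[measurable]: "fB \<in> borel_measurable M" unfolding fB_def by measurable
    have gm[measurable]: "g \<in> borel_measurable M" unfolding g_def by measurable
    define a where "a = vnorm M p fE"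
    define b where "b = vnorm M p fB"
    define c where "c = vnorm M (conj_exp p) g"
    have bc: "b * c \<le> ennreal K * emeasure M B" using K Bb unfolding b_def c_def fB_def g_def by blast
    have nullB: False if "AE x in M. x \<notin> B"
    proof -
      have "{x\<in>space M. \<not> x \<notin> B} = B" using Bsp by auto
      then have "emeasure M B = 0" using AE_iff_measurable[OF Bm, of "\<lambda>x. x \<notin> B"] that by simp
      then show False using Bpos by simp
    qed
    have b0: "b \<noteq> 0"
    proof
      assume "b = 0"
      then have "AE x in M. fB x = 0" using vnorm_zero_AE[OF assms(2) fBm] unfolding b_def by blast
      then have "AE x in M. x \<notin> B" using wae by eventually_elim (auto simp: fB_def split: split_indicator)
      then show False by (rule nullB)
    qed
    have c0: "c \<noteq> 0"
    proof
      assume "c = 0"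
      then have "AE x in M. g x = 0"
        using vnorm_zero_AE[OF conj_exponent[OF assms(2)] gm] unfolding c_def by blast
      then have "AE x in M. x \<notin> B" using wae by eventually_elim (auto simp: g_def split: split_indicator)
      then show False by (rule nullB)
    qed
    have "ennreal K * emeasure M B < top" using Bfin by (simp add: ennreal_mult_less_top)
    then have "b * c < top" by (rule le_less_trans[OF bc])
    then have bt: "b < top" and ct: "c < top" using b0 c0 by (auto simp: ennreal_mult_less_top)
    have Kpos: "0 < K"
    proof (rule ccontr)
      assume "\<not> 0 < K"
      then have "ennreal K = 0" by (simp add: ennreal_eq_0_iff)
      then have "b * c = 0" using bc by simp
      then show False using b0 c0 by simp
    qed
    have muE: "emeasure M E = (\<integral>\<^sup>+x. fE x * g x \<partial>M)"
    proof -
      have "emeasure M E = (\<integral>\<^sup>+x. indicator E x \<partial>M)" by simp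
      also have "\<dots> = (\<integral>\<^sup>+x. fE x * g x \<partial>M)"
      proof (rule nn_integral_cong_AE)
        show "AE x in M. indicator E x = fE x * g x"
          using wae
        proof (rule eventually_mono)
          fix x assume "0 < w x \<and> w x < \<infinity>"
          then have "w x * inverse (w x) = 1" by (intro enn_mult_inverse) auto
          then show "indicator E x = fE x * g x" using EB unfolding fE_def g_def
            by (auto split: split_indicator simp: ac_simps)
        qed
      qed
      finally show ?thesis .
    qed
    have hol: "emeasure M E \<le> 4 * a * c"
      unfolding muE a_def c_def using holder_vnorm[OF assms(2) fEm gm] c0 ct unfolding c_def
      by (simp add: zero_less_iff_neq_zero)
    have "emeasure M E / emeasure M B \<le> ennreal (4 * K) * (a / b)"
    proof (cases "a = top")
      case True
      have "a / b = top" using True bt by (simp add: ennreal_top_divide)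
      moreover have "ennreal (4 * K) * top = top" using Kpos by (simp add: ennreal_mult_top)
      ultimately show ?thesis by simp
    next
      case False
      obtain a' where a': "a = ennreal a'" "0 \<le> a'" using False by (cases a rule: ennreal_cases) auto
      obtain b' where b': "b = ennreal b'" "0 < b'" using bt b0 by (cases b rule: ennreal_cases) auto
      obtain c' where c': "c = ennreal c'" "0 < c'" using ct c0 by (cases c rule: ennreal_cases) auto
      obtain m where m: "emeasure M B = ennreal m" "0 < m" using Bfin Bpos
        by (cases "emeasure M B" rule: ennreal_cases) auto
      have "emeasure M E \<le> emeasure M B" using EB by (rule emeasure_mono) simp
      then obtain e where e: "emeasure M E = ennreal e" "0 \<le> e" using Bfin
        by (cases "emeasure M E" rule: ennreal_cases) auto
      have h1: "e \<le> 4 * a' * c'"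
      proof -
        have "ennreal e \<le> ennreal (4 * a' * c')" using hol a' c' e
          by (simp add: ennreal_mult[symmetric] ennreal_mult'' )
        then show ?thesis using a' c' by simp
      qed
      have h2: "b' * c' \<le> K * m"
      proof -
        have "ennreal (b' * c') \<le> ennreal (K * m)" using bc b' c' m Kpos
          by (simp add: ennreal_mult[symmetric])
        then show ?thesis using Kpos m by simp
      qed
      have "e * b' \<le> 4 * a' * c' * b'" using h1 b' by (intro mult_right_mono) auto
      also have "\<dots> = 4 * a' * (b' * c')" by (simp add: algebra_simps)
      also have "\<dots> \<le> 4 * a' * (K * m)" using h2 a' by (intro mult_left_mono) auto
      finally have "e / m \<le> 4 * K * (a' / b')" using b' m by (simp add: field_simps)
      then have "ennreal (e / m) \<le> ennreal (4 * K * (a' / b'))" by (rule ennreal_leI)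
      then show ?thesis using a' b' m e Kpos
        by (simp add: divide_ennreal ennreal_mult[symmetric])
    qed
    then show "emeasure M E / emeasure M B \<le> ennreal (4 * K) * (vnorm M p (\<lambda>x. w x * indicator E x) / vnorm M p (\<lambda>x. w x * indicator B x))"
      unfolding a_def b_def fE_def fB_def .
  qed
qed

end
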